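(* Let $T$ be a doubly substochastic operator. Then $F_T(x,y):=\int_0^xT\mathbf{1}_{[0,y]}(s)\,ds$, $(x,y)\in\mathbb{R}_+^2$, is a bivariate subdistribution function. If $T$ is additionally equivariant, then $F_T$ is a bivariate tail dependence function, i.e. $F_T(\mathbf{w})=\lim_{s\searrow0}C(s\mathbf{w})/s$ for all $\mathbf{w}\in\mathbb{R}_+^2$ for some $2$-copula $C$.
   Context: $\mathbb{R}_+=[0,\infty)$ with Lebesgue measure; $L^1(\mathbb{R}_+)+L^\infty(\mathbb{R}_+):=\{f+g: f\in L^1(\mathbb{R}_+),g\in L^\infty(\mathbb{R}_+)\}$. A linear operator $T:L^1(\mathbb{R}_+)+L^\infty(\mathbb{R}_+)\to L^1(\mathbb{R}_+)+L^\infty(\mathbb{R}_+)$ is doubly substochastic if (i) $Tf\ge0$ whenever $f\ge0$; (ii) $T(L^1)\subset L^1$ and $T(L^\infty)\subset L^\infty$; (iii) $\|Tf\|_1\le\|f\|_1$ for $f\in L^1$ and $\|Tg\|_\infty\le\|g\|_\infty$ for $g\in L^\infty$; (iv) $Tf=\sup_nTf_n$ whenever $f_n\in L^1\cap L^\infty$, $f\in L^\infty$ and $f_n\nearrow f$. $T$ is equivariant if $T(f\circ\sigma)=(Tf)\circ\sigma$ for all dilations $\sigma(x)=x/s$, $s>0$. A function $F:\mathbb{R}_+^d\to\mathbb{R}_+$ is a subdistribution function if it is nonnegative, $d$-increasing, bounded above by $\min_iw_i$, and Lipschitz with constant $1$ (i.e. $|F(\mathbf{x})-F(\mathbf{y})|\le\sum_i|x_i-y_i|$).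 A bivariate tail dependence function is one of the form $\mathbf{w}\mapsto\lim_{s\searrow0}C(s\mathbf{w})/s$ for a $2$-copula $C$; equivalently, a positively homogeneous (of order $1$) subdistribution function. *)

theory Defs
  imports "HOL-Analysis.Analysis"
begin

text \<open>Lebesgue measure on R_+ = [0,oo). Functions are real-valued functions on the reals;
  only their values on R_+ matter (everything is relative to this measure, and all
  identities between functions are understood almost everywhere).\<close>

definition Rp :: "real measure" where
  "Rp = lebesgue_on {0..}"

definition L1 :: "(real \<Rightarrow> real) set" where
  "L1 = {f. integrable Rp f}"

definition Linf :: "(real \<Rightarrow> real) set" where
  "Linf = {f. f \<in> borel_measurable Rp \<and> (\<exists>C. AE x in Rp. \<bar>f x\<bar> \<le> C)}"

definition L1_plus_Linf :: "(real \<Rightarrow> real) set" where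
  "L1_plus_Linf = {f. \<exists>g h. g \<in> L1 \<and> h \<in> Linf \<and> (AE x in Rp. f x = g x + h x)}"

definition norm1 :: "(real \<Rightarrow> real) \<Rightarrow> real" where
  "norm1 f = (\<integral>x. \<bar>f x\<bar> \<partial>Rp)"

definition norminf :: "(real \<Rightarrow> real) \<Rightarrow> real" where
  "norminf f = Inf {C. AE x in Rp. \<bar>f x\<bar> \<le> C}"

definition doubly_substochastic :: "((real \<Rightarrow> real) \<Rightarrow> (real \<Rightarrow> real)) \<Rightarrow> bool" where
  "doubly_substochastic T \<longleftrightarrow>
     \<comment> \<open>T maps L1+Linf into L1+Linf\<close>
     (\<forall>f\<in>L1_plus_Linf. T f \<in> L1_plus_Linf) \<and>
     \<comment> \<open>linearity (as operator on a.e.-classes)\<close>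
     (\<forall>f\<in>L1_plus_Linf. \<forall>g\<in>L1_plus_Linf. \<forall>a b::real.
        AE x in Rp. T (\<lambda>t. a * f t + b * g t) x = a * T f x + b * T g x) \<and>
     \<comment> \<open>(i) positivity\<close>
     (\<forall>f\<in>L1_plus_Linf. (AE x in Rp. f x \<ge> 0) \<longrightarrow> (AE x in Rp. T f x \<ge> 0)) \<and>
     \<comment> \<open>(ii) invariance of L1 and Linf\<close>
     (\<forall>f\<in>L1. T f \<in> L1) \<and> (\<forall>g\<in>Linf. T g \<in> Linf) \<and>
     \<comment> \<open>(iii) contractivity\<close>
     (\<forall>f\<in>L1. norm1 (T f) \<le> norm1 f) \<and> (\<forall>g\<in>Linf. norminf (T g) \<le> norminf g) \<and>
     \<comment> \<open>(iv) order continuity\<close>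
     (\<forall>fs f. (\<forall>n. fs n \<in> L1 \<inter> Linf) \<longrightarrow> f \<in> Linf \<longrightarrow>
        (AE x in Rp. incseq (\<lambda>n. fs n x) \<and> (\<lambda>n. fs n x) \<longlonglongrightarrow> f x) \<longrightarrow>
        (AE x in Rp. T f x = (SUP n. T (fs n) x)))"

definition equivariant :: "((real \<Rightarrow> real) \<Rightarrow> (real \<Rightarrow> real)) \<Rightarrow> bool" where
  "equivariant T \<longleftrightarrow>
     (\<forall>f\<in>L1_plus_Linf. \<forall>s::real. s > 0 \<longrightarrow>
        (AE x in Rp. T (\<lambda>t. f (t / s)) x = T f (x / s)))"

definition F_op :: "((real \<Rightarrow> real) \<Rightarrow> (real \<Rightarrow> real)) \<Rightarrow> real \<Rightarrow> real \<Rightarrow> real" where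
  "F_op T x y = (\<integral>s\<in>{0..x}. T (indicator {0..y}) s \<partial>lebesgue)"

definition subdistribution2 :: "(real \<Rightarrow> real \<Rightarrow> real) \<Rightarrow> bool" where
  "subdistribution2 F \<longleftrightarrow>
     (\<forall>x\<ge>0. \<forall>y\<ge>0. 0 \<le> F x y) \<and>
     (\<forall>x1 x2 y1 y2. 0 \<le> x1 \<longrightarrow> x1 \<le> x2 \<longrightarrow> 0 \<le> y1 \<longrightarrow> y1 \<le> y2 \<longrightarrow>
        F x2 y2 - F x1 y2 - F x2 y1 + F x1 y1 \<ge> 0) \<and>
     (\<forall>x\<ge>0. \<forall>y\<ge>0. F x y \<le> min x y) \<and>
     (\<forall>x\<ge>0. \<forall>y\<ge>0. \<forall>x'\<ge>0. \<forall>y'\<ge>0. \<bar>F x y - F x' y'\<bar> \<le> \<bar>x - x'\<bar> + \<bar>y - y'\<bar>)"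

definition copula2 :: "(real \<Rightarrow> real \<Rightarrow> real) \<Rightarrow> bool" where
  "copula2 C \<longleftrightarrow>
     (\<forall>u\<in>{0..1}. C u 0 = 0 \<and> C 0 u = 0 \<and> C u 1 = u \<and> C 1 u = u) \<and>
     (\<forall>u1 u2 v1 v2. 0 \<le> u1 \<longrightarrow> u1 \<le> u2 \<longrightarrow> u2 \<le> 1 \<longrightarrow> 0 \<le> v1 \<longrightarrow> v1 \<le> v2 \<longrightarrow> v2 \<le> 1 \<longrightarrow>
        C u2 v2 - C u1 v2 - C u2 v1 + C u1 v1 \<ge> 0)"

definition tail_dependence2 :: "(real \<Rightarrow> real \<Rightarrow> real) \<Rightarrow> bool" where
  "tail_dependence2 F \<longleftrightarrow>
     (\<exists>C. copula2 C \<and>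
        (\<forall>x\<ge>0. \<forall>y\<ge>0. ((\<lambda>s. C (s * x) (s * y) / s) \<longlongrightarrow> F x y) (at_right 0)))"

end

theory Submission
  imports Defs
begin


lemma Rp_space: "space Rp = {0..}" by (simp add: Rp_def)

lemma Rp_sets: "A \<in> sets lebesgue \<Longrightarrow> A \<subseteq> {0..} \<Longrightarrow> A \<in> sets Rp"
  unfolding Rp_def by (simp add: sets_restrict_space_iff)

lemma Rp_emeasure: "A \<subseteq> {0..} \<Longrightarrow> emeasure Rp A = emeasure lebesgue A"
  unfolding Rp_def by (simp add: emeasure_restrict_space)

lemma Rp_measure: "A \<subseteq> {0..} \<Longrightarrow> measure Rp A = measure lebesgue A"
  unfolding Rp_def by (simp add: measure_restrict_space)

lemma not_AE_False: "\<not> (AE x in Rp. False)"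
proof
  assume "AE x in Rp. False"
  then have "AE x in Rp. x \<notin> {0..1::real}" by (rule eventually_mono) auto
  moreover have "{0..1::real} \<in> sets Rp" by (rule Rp_sets) auto
  ultimately have "{0..1::real} \<in> null_sets Rp" using AE_iff_null_sets by blast
  then have "emeasure Rp {0..1::real} = 0" by auto
  moreover have "emeasure Rp {0..1::real} = 1" by (subst Rp_emeasure) auto
  ultimately show False by simp
qed

lemma norminf_set_nonneg: fixes f :: "real \<Rightarrow> real" shows "AE x in Rp. \<bar>f x\<bar> \<le> C \<Longrightarrow> 0 \<le> C"
proof (rule ccontr)
  assume H: "AE x in Rp. \<bar>f x\<bar> \<le> C" and C: "\<not> 0 \<le> C"
  have K: "\<bar>f x\<bar> \<le> C \<Longrightarrow> False" for x using C abs_ge_zero[of "f x"] by linarith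
  have "AE x in Rp. False" by (metis (mono_tags) H K eventually_mono)
  then show False using not_AE_False by blast
qed

lemma norminf_bdd: fixes f :: "real \<Rightarrow> real" shows "bdd_below {C. AE x in Rp. \<bar>f x\<bar> \<le> C}"
  unfolding bdd_below_def using norminf_set_nonneg by blast

lemma Linf_AE:
  fixes f :: "real \<Rightarrow> real"
  assumes "f \<in> Linf"
  shows "AE x in Rp. \<bar>f x\<bar> \<le> norminf f"
proof -
  let ?S = "{C. AE x in Rp. \<bar>f x\<bar> \<le> C}"
  from assms obtain C0 where "C0 \<in> ?S" unfolding Linf_def by auto
  then have ne: "?S \<noteq> {}" by auto
  have "AE x in Rp. \<bar>f x\<bar> \<le> norminf f + 1 / (real n + 1)" for n
  proof -
    have "Inf ?S < norminf f + 1 / (real n + 1)" unfolding norminf_def by simp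
    then obtain C where "C \<in> ?S" "C < norminf f + 1 / (real n + 1)"
      using cInf_lessD[OF ne] by blast
    then have H: "AE x in Rp. \<bar>f x\<bar> \<le> C" and C: "C < norminf f + 1 / (real n + 1)" by auto
    from H show ?thesis by eventually_elim (use C in auto)
  qed
  then have "AE x in Rp. \<forall>n. \<bar>f x\<bar> \<le> norminf f + 1 / (real n + 1)"
    by (simp add: AE_all_countable)
  then show ?thesis
  proof (rule eventually_mono)
    fix x assume H: "\<forall>n. \<bar>f x\<bar> \<le> norminf f + 1 / (real n + 1)"
    show "\<bar>f x\<bar> \<le> norminf f"
    proof (rule field_le_epsilon)
      fix e :: real assume "0 < e"
      then obtain n :: nat where "1 / e < real n" using reals_Archimedean2 by blast
      then have "1 / (real n + 1) < e" using \<open>0 < e\<close>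
      proof -
        have "1 / e < real n + 1" using \<open>1 / e < real n\<close> by linarith
        then show ?thesis using \<open>0 < e\<close> by (simp add: field_simps)
      qed
      then show "\<bar>f x\<bar> \<le> norminf f + e" using H[rule_format, of n] by linarith
    qed
  qed
qed

lemma norminf_le: fixes f :: "real \<Rightarrow> real" shows "AE x in Rp. \<bar>f x\<bar> \<le> C \<Longrightarrow> norminf f \<le> C"
  unfolding norminf_def by (rule cInf_lower) (auto intro: norminf_bdd)

definition good_set :: "real set \<Rightarrow> bool" where
  "good_set A \<longleftrightarrow> A \<in> sets lebesgue \<and> (\<exists>b. A \<subseteq> {0..b})"

lemma good_set_fin: "good_set A \<Longrightarrow> emeasure lebesgue A < \<infinity>"
proof -
  assume "good_set A"
  then obtain b where A: "A \<in> sets lebesgue" "A \<subseteq> {0..b}" unfolding good_set_def by auto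
  have "emeasure lebesgue A \<le> emeasure lebesgue {0..b}" using A by (intro emeasure_mono) auto
  also have "\<dots> < \<infinity>" by (cases "0 \<le> b") auto
  finally show ?thesis .
qed

lemma good_set_sub: "good_set A \<Longrightarrow> A \<subseteq> {0..}"
  unfolding good_set_def by auto

lemma good_set_Rp: "good_set A \<Longrightarrow> A \<in> sets Rp"
  by (meson Rp_sets good_set_def good_set_sub)

lemma ind_props:
  assumes "good_set A"
  shows "indicator A \<in> L1" "indicator A \<in> Linf" "indicator A \<in> L1_plus_Linf"
    "norm1 (indicator A) = measure lebesgue A" "norminf (indicator A :: real \<Rightarrow> real) \<le> 1"
proof -
  have S: "A \<in> sets Rp" using assms by (rule good_set_Rp)
  have "emeasure Rp A < \<infinity>" using good_set_fin[OF assms] Rp_emeasure[OF good_set_sub[OF assms]] by simp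
  then show 1: "indicator A \<in> L1" unfolding L1_def using S by (simp add: integrable_real_indicator)
  have AEb: "AE x in Rp. \<bar>indicator A x :: real\<bar> \<le> 1" by (auto simp: indicator_def)
  show 2: "indicator A \<in> Linf" unfolding Linf_def using S AEb by auto
  have "(\<lambda>_. 0::real) \<in> Linf" unfolding Linf_def by auto
  then show "indicator A \<in> L1_plus_Linf" unfolding L1_plus_Linf_def using 1
    by (intro CollectI exI[of _ "indicator A"] exI[of _ "\<lambda>_. 0"]) auto
  have "(\<lambda>x. \<bar>indicator A x :: real\<bar>) = indicator A" by (auto simp: indicator_def fun_eq_iff)
  then have "norm1 (indicator A) = integral\<^sup>L Rp (indicator A)" unfolding norm1_def
    by simp
  also have "\<dots> = measure Rp (A \<inter> space Rp)" by (rule Bochner_Integration.integral_indicator)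
  also have "\<dots> = measure Rp A" using good_set_sub[OF assms] by (simp add: Rp_space Int_absorb2)
  also have "\<dots> = measure lebesgue A" using good_set_sub[OF assms] by (rule Rp_measure)
  finally show "norm1 (indicator A) = measure lebesgue A" .
  show "norminf (indicator A :: real \<Rightarrow> real) \<le> 1" using AEb by (rule norminf_le)
qed

lemma T_ind:
  assumes T: "doubly_substochastic T" and A: "good_set A"
  shows "AE x in Rp. 0 \<le> T (indicator A) x \<and> T (indicator A) x \<le> 1"
    "integrable Rp (T (indicator A))"
    "(\<integral>x. \<bar>T (indicator A) x\<bar> \<partial>Rp) \<le> measure lebesgue A"
proof -
  note ip = ind_props[OF A]
  have pos: "AE x in Rp. 0 \<le> T (indicator A) x"
    using T ip(3) unfolding doubly_substochastic_def by auto
  have "T (indicator A) \<in> Linf" using T ip(2) unfolding doubly_substochastic_def by auto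
  then have "AE x in Rp. \<bar>T (indicator A) x\<bar> \<le> norminf (T (indicator A))" by (rule Linf_AE)
  moreover have "norminf (T (indicator A)) \<le> 1"
    using T ip(2,5) unfolding doubly_substochastic_def by (meson order_trans)
  ultimately have "AE x in Rp. \<bar>T (indicator A) x\<bar> \<le> 1"
    by (metis (mono_tags, lifting) eventually_mono order_trans)
  with pos show "AE x in Rp. 0 \<le> T (indicator A) x \<and> T (indicator A) x \<le> 1" by eventually_elim auto
  have "T (indicator A) \<in> L1" using T ip(1) unfolding doubly_substochastic_def by auto
  then show "integrable Rp (T (indicator A))" unfolding L1_def by auto
  have "norm1 (T (indicator A)) \<le> norm1 (indicator A)" using T ip(1) unfolding doubly_substochastic_def by auto
  then show "(\<integral>x. \<bar>T (indicator A) x\<bar> \<partial>Rp) \<le> measure lebesgue A" using ip(4) unfolding norm1_def by simp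
qed

lemma set_int_Rp: fixes f :: "real \<Rightarrow> real" shows
  "(\<integral>s\<in>{0..x}. f s \<partial>lebesgue) = (\<integral>s. indicator {0..x} s * f s \<partial>Rp)"
proof -
  have "(\<integral>s. indicator {0..x} s * f s \<partial>Rp) = (\<integral>s. indicator {0..} s *\<^sub>R (indicator {0..x} s * f s) \<partial>lebesgue)"
    unfolding Rp_def by (subst integral_restrict_space) auto
  also have "\<dots> = (\<integral>s. indicator {0..x} s *\<^sub>R f s \<partial>lebesgue)"
    by (rule Bochner_Integration.integral_cong) (auto simp: indicator_def)
  finally show ?thesis by (simp add: set_lebesgue_integral_def)
qed

definition II :: "real set \<Rightarrow> (real \<Rightarrow> real) \<Rightarrow> real" where
  "II A h = (\<integral>s. indicator A s * h s \<partial>Rp)"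

lemma II_integrable: fixes h :: "real \<Rightarrow> real" shows "good_set A \<Longrightarrow> integrable Rp h \<Longrightarrow> integrable Rp (\<lambda>s. indicator A s * h s)"
  using integrable_mult_indicator[OF good_set_Rp, of A h] by simp

lemma II_bounds:
  fixes h :: "real \<Rightarrow> real"
  assumes A: "good_set A" and h: "integrable Rp h" "AE x in Rp. 0 \<le> h x \<and> h x \<le> 1"
  shows "0 \<le> II A h" "II A h \<le> measure lebesgue A" "II A h \<le> (\<integral>x. \<bar>h x\<bar> \<partial>Rp)"
proof -
  show "0 \<le> II A h" unfolding II_def
    by (rule integral_nonneg_AE) (use h(2) in \<open>eventually_elim, auto simp: indicator_def\<close>)
  have "II A h \<le> (\<integral>s. indicator A s \<partial>Rp)" unfolding II_def
    apply (rule integral_mono_AE)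
    using II_integrable[OF A h(1)] apply simp
    using ind_props(1)[OF A] unfolding L1_def apply simp
    using h(2) by eventually_elim (auto simp: indicator_def)
  also have "\<dots> = measure lebesgue A" using good_set_sub[OF A] Rp_measure[OF good_set_sub[OF A]]
    by (simp add: Rp_space Int_absorb2)
  finally show "II A h \<le> measure lebesgue A" .
  show "II A h \<le> (\<integral>x. \<bar>h x\<bar> \<partial>Rp)" unfolding II_def
    apply (rule integral_mono_AE)
    using II_integrable[OF A h(1)] apply simp
    using h(1) apply simp
    using h(2) by eventually_elim (auto simp: indicator_def)
qed



lemma good_Icc: "good_set {0..y}" unfolding good_set_def by auto
lemma good_Ioc: "0 \<le> a \<Longrightarrow> good_set {a<..b}" unfolding good_set_def
  by (intro conjI exI[of _ b]) auto

lemma F_II: "0 \<le> x \<Longrightarrow> F_op T x y = II {0..x} (T (indicator {0..y}))"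
  unfolding F_op_def II_def by (rule set_int_Rp)

lemma T_rel:
  assumes T: "doubly_substochastic T" and y: "0 \<le> y1" "y1 \<le> y2"
  shows "AE s in Rp. T (indicator {0..y2}) s = T (indicator {0..y1}) s + T (indicator {y1<..y2}) s"
proof -
  have lin: "AE s in Rp. T (\<lambda>t. 1 * indicator {0..y2} t + (-1) * indicator {0..y1} t) s =
      1 * T (indicator {0..y2}) s + (-1) * T (indicator {0..y1}) s"
    using T ind_props(3)[OF good_Icc] unfolding doubly_substochastic_def by blast
  have "(\<lambda>t. 1 * indicator {0..y2} t + (-1) * indicator {0..y1} t) = (indicator {y1<..y2} :: real \<Rightarrow> real)"
    using y by (auto simp: indicator_def fun_eq_iff)
  with lin have "AE s in Rp. T (indicator {y1<..y2}) s = T (indicator {0..y2}) s - T (indicator {0..y1}) s"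
    by simp
  then show ?thesis by eventually_elim simp
qed

lemma II_add:
  fixes h1 h2 h3 :: "real \<Rightarrow> real"
  assumes A: "good_set A" and i: "integrable Rp h1" "integrable Rp h2" "integrable Rp h3"
    and e: "AE s in Rp. h2 s = h1 s + h3 s"
  shows "II A h2 = II A h1 + II A h3"
proof -
  have "II A h2 = (\<integral>s. indicator A s * h1 s + indicator A s * h3 s \<partial>Rp)" unfolding II_def
  proof (rule integral_cong_AE)
    show "(\<lambda>s. indicator A s * h2 s) \<in> borel_measurable Rp"
      using II_integrable[OF A i(2)] by (rule borel_measurable_integrable)
    show "(\<lambda>s. indicator A s * h1 s + indicator A s * h3 s) \<in> borel_measurable Rp"
      using II_integrable[OF A i(1)] II_integrable[OF A i(3)] by (intro borel_measurable_add borel_measurable_integrable)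
    show "AE s in Rp. indicator A s * h2 s = indicator A s * h1 s + indicator A s * h3 s"
      using e by eventually_elim (simp add: algebra_simps)
  qed
  also have "\<dots> = II A h1 + II A h3" unfolding II_def
    by (rule Bochner_Integration.integral_add) (auto intro: II_integrable A i)
  finally show ?thesis .
qed

lemma II_split:
  fixes h :: "real \<Rightarrow> real"
  assumes x: "0 \<le> x1" "x1 \<le> x2" and h: "integrable Rp h"
  shows "II {0..x2} h = II {0..x1} h + II {x1<..x2} h"
proof -
  have "II {0..x2} h = (\<integral>s. indicator {0..x1} s * h s + indicator {x1<..x2} s * h s \<partial>Rp)"
    unfolding II_def using x by (intro Bochner_Integration.integral_cong) (auto simp: indicator_def)
  also have "\<dots> = II {0..x1} h + II {x1<..x2} h" unfolding II_def
    by (rule Bochner_Integration.integral_add) (auto intro!: II_integrable h good_Icc good_Ioc x)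
  finally show ?thesis .
qed

lemma part1:
  assumes T: "doubly_substochastic T"
  shows "subdistribution2 (F_op T)"
proof -
  define g where "g y = T (indicator {0..y})" for y
  define d where "d a b = T (indicator {a<..b})" for a b
  have gi: "integrable Rp (g y)" "AE x in Rp. 0 \<le> g y x \<and> g y x \<le> 1" for y
    unfolding g_def using T_ind[OF T good_Icc] by auto
  have gn: "(\<integral>x. \<bar>g y x\<bar> \<partial>Rp) \<le> y" if "0 \<le> y" for y
    unfolding g_def using T_ind(3)[OF T good_Icc, of y] that by simp
  have di: "integrable Rp (d a b)" "AE x in Rp. 0 \<le> d a b x \<and> d a b x \<le> 1" if "0 \<le> a" for a b
    unfolding d_def using T_ind[OF T good_Ioc[OF that]] by auto
  have dn: "(\<integral>x. \<bar>d a b x\<bar> \<partial>Rp) \<le> b - a" if "0 \<le> a" "a \<le> b" for a b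
    unfolding d_def using T_ind(3)[OF T good_Ioc[OF that(1)], of b] that by simp
  have F: "F_op T x y = II {0..x} (g y)" if "0 \<le> x" for x y
    unfolding g_def using F_II that by blast
  have gd: "II A (g y2) = II A (g y1) + II A (d y1 y2)" if "good_set A" "0 \<le> y1" "y1 \<le> y2" for A y1 y2
    using II_add[OF that(1) gi(1) gi(1) di(1)] T_rel[OF T that(2,3)] that unfolding g_def d_def by blast
  have Lx: "0 \<le> F_op T x' y - F_op T x y \<and> F_op T x' y - F_op T x y \<le> x' - x"
    if "0 \<le> x" "x \<le> x'" for x x' y
  proof -
    have "F_op T x' y - F_op T x y = II {x<..x'} (g y)"
      using F II_split[OF that gi(1)] that by simp
    moreover have "0 \<le> II {x<..x'} (g y)" "II {x<..x'} (g y) \<le> measure lebesgue {x<..x'}"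
      using II_bounds[OF good_Ioc[OF that(1)] gi] by auto
    ultimately show ?thesis using that by simp
  qed
  have Ly: "0 \<le> F_op T x y' - F_op T x y \<and> F_op T x y' - F_op T x y \<le> y' - y"
    if "0 \<le> x" "0 \<le> y" "y \<le> y'" for x y y'
  proof -
    have "F_op T x y' - F_op T x y = II {0..x} (d y y')"
      using F gd[OF good_Icc that(2,3)] that by simp
    moreover have "0 \<le> II {0..x} (d y y')" "II {0..x} (d y y') \<le> (\<integral>s. \<bar>d y y' s\<bar> \<partial>Rp)"
      using II_bounds[OF good_Icc di[OF that(2)]] by auto
    ultimately show ?thesis using dn[OF that(2,3)] by simp
  qed
  show ?thesis unfolding subdistribution2_def
  proof (intro conjI allI impI)
    fix x y :: real assume xy: "0 \<le> x" "0 \<le> y"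
    show "0 \<le> F_op T x y" using F[OF xy(1)] II_bounds(1)[OF good_Icc gi] by simp
    have "F_op T x y \<le> x" using F[OF xy(1)] II_bounds(2)[OF good_Icc gi, of x y] xy by simp
    moreover have "F_op T x y \<le> y" using F[OF xy(1)] II_bounds(3)[OF good_Icc gi, of x y] gn[OF xy(2)] by simp
    ultimately show "F_op T x y \<le> min x y" by simp
  next
    fix x1 x2 y1 y2 :: real
    assume h: "0 \<le> x1" "x1 \<le> x2" "0 \<le> y1" "y1 \<le> y2"
    have "F_op T x2 y2 - F_op T x1 y2 - F_op T x2 y1 + F_op T x1 y1 = II {x1<..x2} (d y1 y2)"
      using F II_split[OF h(1,2) gi(1)] gd[OF good_Ioc[OF h(1)] h(3,4)] h by simp
    then show "0 \<le> F_op T x2 y2 - F_op T x1 y2 - F_op T x2 y1 + F_op T x1 y1"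
      using II_bounds(1)[OF good_Ioc[OF h(1)] di[OF h(3)]] by simp
  next
    fix x y x' y' :: real
    assume h: "0 \<le> x" "0 \<le> y" "0 \<le> x'" "0 \<le> y'"
    have 1: "\<bar>F_op T x y - F_op T x' y\<bar> \<le> \<bar>x - x'\<bar>"
    proof (cases "x \<le> x'")
      case True then show ?thesis using Lx[OF h(1) True, of y] by linarith
    next
      case False then show ?thesis using Lx[OF h(3), of x y] by linarith
    qed
    have 2: "\<bar>F_op T x' y - F_op T x' y'\<bar> \<le> \<bar>y - y'\<bar>"
    proof (cases "y \<le> y'")
      case True then show ?thesis using Ly[OF h(3) h(2) True] by linarith
    next
      case False then show ?thesis using Ly[OF h(3) h(4), of y] by linarith
    qed
    show "\<bar>F_op T x y - F_op T x' y'\<bar> \<le> \<bar>x - x'\<bar> + \<bar>y - y'\<bar>" using 1 2 by linarith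
  qed
qed



lemma tail_from_hom:
  assumes S: "subdistribution2 F"
    and H: "\<And>s x y. 0 < s \<Longrightarrow> 0 \<le> x \<Longrightarrow> 0 \<le> y \<Longrightarrow> F (s * x) (s * y) = s * F x y"
  shows "tail_dependence2 F"
proof -
  note Sd = S[unfolded subdistribution2_def]
  have nn: "\<And>x y. 0 \<le> x \<Longrightarrow> 0 \<le> y \<Longrightarrow> 0 \<le> F x y"
    using conjunct1[OF Sd] by blast
  have inc: "\<And>x1 x2 y1 y2. 0 \<le> x1 \<Longrightarrow> x1 \<le> x2 \<Longrightarrow> 0 \<le> y1 \<Longrightarrow> y1 \<le> y2 \<Longrightarrow>
        F x2 y2 - F x1 y2 - F x2 y1 + F x1 y1 \<ge> 0"
    using conjunct1[OF conjunct2[OF Sd]] by blast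
  have mn: "\<And>x y. 0 \<le> x \<Longrightarrow> 0 \<le> y \<Longrightarrow> F x y \<le> min x y"
    using conjunct1[OF conjunct2[OF conjunct2[OF Sd]]] by blast
  have lip: "\<And>x y x' y'. 0 \<le> x \<Longrightarrow> 0 \<le> y \<Longrightarrow> 0 \<le> x' \<Longrightarrow> 0 \<le> y' \<Longrightarrow>
        \<bar>F x y - F x' y'\<bar> \<le> \<bar>x - x'\<bar> + \<bar>y - y'\<bar>"
    using conjunct2[OF conjunct2[OF conjunct2[OF Sd]]] by blast
  define a where "a u = u - F u 1" for u
  define b where "b v = v - F 1 v" for v
  define k where "k = inverse (1 - F 1 1)"
  define C where "C u v = F u v + k * (a u * b v)" for u v
  have F11: "F 1 1 \<le> 1" using mn[of 1 1] by simp
  have k0: "0 \<le> k" unfolding k_def using F11 by simp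
  have a_rng: "0 \<le> a t \<and> a t \<le> t" if "0 \<le> t" for t
    using nn[OF that, of 1] mn[OF that, of 1] unfolding a_def by simp
  have b_rng: "0 \<le> b t \<and> b t \<le> t" if "0 \<le> t" for t
    using nn[OF _ that, of 1] mn[OF _ that, of 1] unfolding b_def by simp
  have a_mono: "a u1 \<le> a u2" if "0 \<le> u1" "u1 \<le> u2" for u1 u2
    using lip[of u1 1 u2 1] that unfolding a_def by simp
  have b_mono: "b v1 \<le> b v2" if "0 \<le> v1" "v1 \<le> v2" for v1 v2
    using lip[of 1 v1 1 v2] that unfolding b_def by simp
  have F0: "F u 0 = 0" "F 0 u = 0" if "0 \<le> u" for u
    using nn[OF that, of 0] mn[OF that, of 0] nn[OF _ that, of 0] mn[OF _ that, of 0] by auto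
  have marg_a: "k * (a u * b 1) = a u" if "0 \<le> u" "u \<le> 1" for u
  proof (cases "F 1 1 = 1")
    case True
    have "F u 1 \<ge> u" using lip[of u 1 1 1] that True by simp
    then have "a u = 0" using a_rng[OF that(1)] unfolding a_def by simp
    then show ?thesis by simp
  next
    case False then show ?thesis unfolding k_def b_def by (simp add: field_simps)
  qed
  have marg_b: "k * (a 1 * b u) = b u" if "0 \<le> u" "u \<le> 1" for u
  proof (cases "F 1 1 = 1")
    case True
    have "F 1 u \<ge> u" using lip[of 1 u 1 1] that True by simp
    then have "b u = 0" using b_rng[OF that(1)] unfolding b_def by simp
    then show ?thesis by simp
  next
    case False then show ?thesis unfolding k_def a_def by (simp add: field_simps)
  qed
  have cop: "copula2 C" unfolding copula2_def
  proof (intro conjI ballI allI impI)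
    fix u :: real assume u: "u \<in> {0..1}"
    then have u0: "0 \<le> u" "u \<le> 1" by auto
    show "C u 0 = 0" unfolding C_def using F0[OF u0(1)] F0[of 1] unfolding b_def by simp
    show "C 0 u = 0" unfolding C_def using F0[OF u0(1)] F0[of 1] unfolding a_def by simp
    have "C u 1 = F u 1 + a u" unfolding C_def using marg_a[OF u0] by simp
    then show "C u 1 = u" by (simp add: a_def)
    have "C 1 u = F 1 u + b u" unfolding C_def using marg_b[OF u0] by simp
    then show "C 1 u = u" by (simp add: b_def)
  next
    fix u1 u2 v1 v2 :: real
    assume h: "0 \<le> u1" "u1 \<le> u2" "u2 \<le> 1" "0 \<le> v1" "v1 \<le> v2" "v2 \<le> 1"
    have "C u2 v2 - C u1 v2 - C u2 v1 + C u1 v1 =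
      (F u2 v2 - F u1 v2 - F u2 v1 + F u1 v1) + k * ((a u2 - a u1) * (b v2 - b v1))"
      unfolding C_def by (simp add: algebra_simps)
    moreover have "0 \<le> F u2 v2 - F u1 v2 - F u2 v1 + F u1 v1" using inc h by simp
    moreover have "0 \<le> k * ((a u2 - a u1) * (b v2 - b v1))"
      using k0 a_mono[OF h(1,2)] b_mono[OF h(4,5)] by simp
    ultimately show "0 \<le> C u2 v2 - C u1 v2 - C u2 v1 + C u1 v1" by linarith
  qed
  have lim: "((\<lambda>s. C (s * x) (s * y) / s) \<longlongrightarrow> F x y) (at_right 0)" if xy: "0 \<le> x" "0 \<le> y" for x y
  proof (rule tendsto_sandwich[where f = "\<lambda>s. F x y" and h = "\<lambda>s. F x y + k * x * y * s"])
    have ev: "eventually (\<lambda>s. 0 < (s::real)) (at_right 0)" by (simp add: eventually_at_right_less)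
    have eq: "C (s * x) (s * y) / s = F x y + k * (a (s * x) * b (s * y)) / s" if "0 < s" for s
      unfolding C_def using H[OF that xy] that by (simp add: field_simps)
    have bnd: "0 \<le> k * (a (s * x) * b (s * y)) / s \<and> k * (a (s * x) * b (s * y)) / s \<le> k * x * y * s"
      if s: "0 < s" for s
    proof -
      have sx: "0 \<le> s * x" "0 \<le> s * y" using s xy by auto
      have A: "0 \<le> a (s * x)" "a (s * x) \<le> s * x" using a_rng[OF sx(1)] by auto
      have B: "0 \<le> b (s * y)" "b (s * y) \<le> s * y" using b_rng[OF sx(2)] by auto
      have "a (s * x) * b (s * y) \<le> (s * x) * (s * y)" using A B by (intro mult_mono) auto
      then have "k * (a (s * x) * b (s * y)) \<le> k * ((s * x) * (s * y))" using k0 by (rule mult_left_mono)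
      then have "k * (a (s * x) * b (s * y)) / s \<le> k * ((s * x) * (s * y)) / s" by (rule divide_right_mono) (use s in simp)
      also have "\<dots> = k * x * y * s" using s by (simp add: field_simps)
      finally show ?thesis using A B k0 s by simp
    qed
    show "eventually (\<lambda>s. F x y \<le> C (s * x) (s * y) / s) (at_right 0)"
      using ev by eventually_elim (use eq bnd in auto)
    show "eventually (\<lambda>s. C (s * x) (s * y) / s \<le> F x y + k * x * y * s) (at_right 0)"
      using ev by eventually_elim (use eq bnd in auto)
    show "((\<lambda>s. F x y) \<longlongrightarrow> F x y) (at_right 0)" by simp
    have "((\<lambda>s. F x y + k * x * y * s) \<longlongrightarrow> F x y + k * x * y * 0) (at_right 0)"
      by (intro tendsto_intros)
    then show "((\<lambda>s. F x y + k * x * y * s) \<longlongrightarrow> F x y) (at_right 0)" by simp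
  qed
  show ?thesis unfolding tail_dependence2_def using cop lim by blast
qed



lemma good_Icc': "good_set {0..y}" unfolding good_set_def by auto

lemma Rp_set_integrable:
  fixes f :: "real \<Rightarrow> real"
  assumes "integrable Rp f"
  shows "set_integrable lebesgue {0..a} f"
proof -
  have "integrable lebesgue (\<lambda>x. indicator {0..} x *\<^sub>R f x)"
    using assms unfolding Rp_def by (subst (asm) integrable_restrict_space) auto
  then have "integrable lebesgue (\<lambda>x. indicator {0..a} x *\<^sub>R (indicator {0..} x *\<^sub>R f x))"
    by (rule integrable_mult_indicator[rotated]) auto
  moreover have "(\<lambda>x. indicator {0..a} x *\<^sub>R (indicator {0..} x *\<^sub>R f x)) = (\<lambda>x. indicator {0..a} x *\<^sub>R f x)"
    by (auto simp: indicator_def fun_eq_iff)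
  ultimately show ?thesis unfolding set_integrable_def by simp
qed

lemma F_has_integral:
  assumes "integrable Rp (T (indicator {0..y}))"
  shows "(T (indicator {0..y}) has_integral F_op T x y) {0..x}"
proof -
  note si = Rp_set_integrable[OF assms, of x]
  show ?thesis unfolding F_op_def
    using set_lebesgue_integral_eq_integral[OF si] by (simp add: integrable_integral)
qed

lemma hom:
  assumes T: "doubly_substochastic T" and E: "equivariant T"
    and s: "0 < s" and xy: "0 \<le> x" "0 \<le> y"
  shows "F_op T (s * x) (s * y) = s * F_op T x y"
proof -
  define G where "G = T (indicator {0..y})"
  define H where "H = T (indicator {0..s * y})"
  have Gi: "integrable Rp G" unfolding G_def
    using T_ind(2)[OF T good_Icc'] by auto
  have Hi: "integrable Rp H" unfolding H_def
    using T_ind(2)[OF T good_Icc'] by auto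
  have G1: "(G has_integral F_op T x y) {0..x}" unfolding G_def
    by (rule F_has_integral) (use Gi G_def in simp)
  have "((\<lambda>t. G ((1/s) * t)) has_integral (1 / \<bar>1/s\<bar>) *\<^sub>R F_op T x y) ((\<lambda>t. t / (1/s)) ` {0..x})"
    by (rule has_integral_stretch_real[OF G1]) (use s in simp)
  moreover have "(\<lambda>t. t / (1/s)) ` {0..x} = {0..s * x}"
    using s by (subst image_divide_atLeastAtMost) (auto simp: mult.commute)
  moreover have "(\<lambda>t. G ((1/s) * t)) = (\<lambda>t. G (t / s))" by (simp add: field_simps)
  ultimately have G2: "((\<lambda>t. G (t / s)) has_integral s * F_op T x y) {0..s * x}"
    using s by simp
  have "indicator {0..y} \<in> L1_plus_Linf" using ind_props(3)[OF good_Icc'] by auto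
  then have "AE t in Rp. T (\<lambda>t. indicator {0..y} (t / s)) t = T (indicator {0..y}) (t / s)"
    using E s unfolding equivariant_def by blast
  moreover have "(\<lambda>t. indicator {0..y} (t / s)) = (indicator {0..s * y} :: real \<Rightarrow> real)"
    using s by (auto simp: indicator_def fun_eq_iff field_simps)
  ultimately have "AE t in Rp. H t = G (t / s)" unfolding H_def G_def by simp
  then have "AE t in lebesgue. t \<in> {0..} \<longrightarrow> H t = G (t / s)"
    unfolding Rp_def by (subst (asm) AE_restrict_space_iff) auto
  then obtain N where N: "\<And>t. t \<in> space lebesgue - N \<Longrightarrow> t \<in> {0..} \<longrightarrow> H t = G (t / s)"
    "N \<in> null_sets lebesgue" by (erule AE_E3)
  have negN: "negligible N" using N(2) by (simp add: negligible_iff_null_sets)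
  have H2: "(H has_integral s * F_op T x y) {0..s * x}"
    by (rule has_integral_spike[OF negN _ G2]) (use N(1) in auto)
  have "(H has_integral F_op T (s * x) (s * y)) {0..s * x}" unfolding H_def
    by (rule F_has_integral) (use Hi H_def in simp)
  with H2 show ?thesis using has_integral_unique by blast
qed


theorem mainTheorem14:
  assumes "doubly_substochastic T"
  shows "subdistribution2 (F_op T) \<and> (equivariant T \<longrightarrow> tail_dependence2 (F_op T))"
proof
  show "subdistribution2 (F_op T)" by (rule part1[OF assms])
  show "equivariant T \<longrightarrow> tail_dependence2 (F_op T)"
  proof
    assume E: "equivariant T"
    show "tail_dependence2 (F_op T)"
      by (rule tail_from_hom[OF part1[OF assms]]) (rule hom[OF assms E])
  qed
qed

end
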